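(* Let $\mathcal P$ and $\mathcal Q$ be two pairs of lines in the plane. If $\mathcal P$ consists of orthogonal lines, then rotating $\mathcal P$ by any angle about the crossing point of its lines does not change the rectangle locus of $\mathcal P$ and $\mathcal Q$.
   Context: A pair of lines means two distinct lines. The rectangle locus of two pairs $L_1,L_3$ and $L_2,L_4$ is the set of points $p$ in the plane that are the midpoint both of a segment joining $L_1$ and $L_3$ and of a segment joining $L_2$ and $L_4$, these two segments having equal length (equivalently, centers of possibly degenerate rectangles whose diagonals join the lines of the respective pairs). *)

theory Defs
  imports "HOL-Analysis.Analysis"
begin

definition is_line :: "complex set \<Rightarrow> bool" where
  "is_line L \<longleftrightarrow> (\<exists>a d. d \<noteq> 0 \<and> L = {a + of_real t * d | t. True})"

definition orthogonal_lines :: "complex set \<Rightarrow> complex set \<Rightarrow> bool" where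
  "orthogonal_lines L M \<longleftrightarrow>
     (\<forall>x\<in>L. \<forall>y\<in>L. \<forall>u\<in>M. \<forall>v\<in>M. (x - y) \<bullet> (u - v) = 0)"

definition rect_locus :: "complex set \<Rightarrow> complex set \<Rightarrow> complex set \<Rightarrow> complex set \<Rightarrow> complex set" where
  "rect_locus L1 L3 L2 L4 =
     {p. \<exists>x1\<in>L1. \<exists>x3\<in>L3. \<exists>x2\<in>L2. \<exists>x4\<in>L4.
           p = (x1 + x3) / 2 \<and> p = (x2 + x4) / 2 \<and> dist x1 x3 = dist x2 x4}"

definition rotate_about :: "complex \<Rightarrow> real \<Rightarrow> complex \<Rightarrow> complex" where
  "rotate_about c \<theta> z = c + cis \<theta> * (z - c)"

end

theory Submission
  imports Defs
begin
lemma perp: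
  fixes d e :: complex
  assumes "d \<noteq> 0" "d \<bullet> e = 0"
  shows "e = of_real ((Re d * Im e - Im d * Re e)/(Re d ^2 + Im d ^2)) * (\<i> * d)"
proof -
  have o: "Re d * Re e + Im d * Im e = 0" using assms(2) by (simp add: inner_complex_def)
  have dd: "Re d ^2 + Im d ^2 > 0" using assms(1) by (metis complex_eqI sum_power2_gt_zero_iff zero_complex.simps)
  have 1: "Re e * (Re d ^2 + Im d ^2) = - Im d * (Re d * Im e - Im d * Re e)"
    using o by algebra
  have 2: "Im e * (Re d ^2 + Im d ^2) = Re d * (Re d * Im e - Im d * Re e)"
    using o by algebra
  define K where "K = (Re d * Im e - Im d * Re e)"
  define D where "D = Re d ^2 + Im d ^2"
  have D0: "D \<noteq> 0" using dd D_def by linarith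
  have a: "Re e = - Im d * K / D" using 1 D0 unfolding K_def[symmetric] D_def[symmetric] by (simp add: field_simps)
  have b: "Im e = Re d * K / D" using 2 D0 unfolding K_def[symmetric] D_def[symmetric] by (simp add: field_simps)
  show ?thesis unfolding K_def[symmetric] D_def[symmetric]
    apply (rule complex_eqI)
    using a b by simp_all
qed

lemma key:
  fixes d c p :: complex and r :: real
  assumes "d \<noteq> 0"
  shows "(\<exists>x1\<in>{c + of_real t * d | t. True}. \<exists>x3\<in>{c + of_real s * (\<i> * d) | s. True}.
            p = (x1+x3)/2 \<and> dist x1 x3 = r) \<longleftrightarrow> r = 2 * cmod (p - c)"
proof
  assume "\<exists>x1\<in>{c + of_real t * d | t. True}. \<exists>x3\<in>{c + of_real s * (\<i> * d) | s. True}.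
            p = (x1+x3)/2 \<and> dist x1 x3 = r"
  then obtain t s where p: "p = ((c + of_real t * d) + (c + of_real s * (\<i> * d)))/2"
     and r: "r = dist (c + of_real t * d) (c + of_real s * (\<i> * d))" by auto
  have "2 * (p - c) = d * (of_real t + \<i> * of_real s)" using p by (simp add: field_simps)
  hence "cmod (2 * (p - c)) = cmod d * cmod (of_real t + \<i> * of_real s)"
    by (simp add: norm_mult)
  moreover have "cmod (2 * (p - c)) = 2 * cmod (p - c)" by (simp only: norm_mult) simp
  ultimately have "2 * cmod (p - c) = cmod d * cmod (of_real t + \<i> * of_real s)"
    by simp
  also have "cmod (of_real t + \<i> * of_real s) = cmod (of_real t - \<i> * of_real s)"
    by (simp add: cmod_def)
  also have "cmod d * cmod (of_real t - \<i> * of_real s) = r"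
    using r by (simp add: dist_norm norm_mult[symmetric] algebra_simps)
  finally show "r = 2 * cmod (p - c)" by simp
next
  assume r: "r = 2 * cmod (p - c)"
  define z where "z = 2 * (p - c) / d"
  have z: "2 * (p - c) = d * (of_real (Re z) + \<i> * of_real (Im z))"
    using assms by (simp add: z_def complex_eq[symmetric])
  show "\<exists>x1\<in>{c + of_real t * d | t. True}. \<exists>x3\<in>{c + of_real s * (\<i> * d) | s. True}.
            p = (x1+x3)/2 \<and> dist x1 x3 = r"
  proof (intro bexI conjI)
    show "c + of_real (Re z) * d \<in> {c + of_real t * d | t. True}" by auto
    show "c + of_real (Im z) * (\<i> * d) \<in> {c + of_real s * (\<i> * d) | s. True}" by auto
    show "p = ((c + of_real (Re z) * d) + (c + of_real (Im z) * (\<i> * d)))/2"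
      using z by (simp add: field_simps)
    have "dist (c + of_real (Re z) * d) (c + of_real (Im z) * (\<i> * d))
       = cmod d * cmod (of_real (Re z) - \<i> * of_real (Im z))"
      by (simp add: dist_norm norm_mult[symmetric] algebra_simps)
    also have "cmod (of_real (Re z) - \<i> * of_real (Im z)) = cmod (of_real (Re z) + \<i> * of_real (Im z))"
      by (simp add: cmod_def)
    also have "cmod d * \<dots> = cmod (2 * (p - c))" using z by (simp add: norm_mult)
    also have "cmod (2 * (p - c)) = 2 * cmod (p - c)" by (simp only: norm_mult) simp
    finally show "dist (c + of_real (Re z) * d) (c + of_real (Im z) * (\<i> * d)) = r"
      using r by simp
  qed
qed
lemma line_through:
  assumes "is_line L" "c \<in> L"
  shows "\<exists>d. d \<noteq> 0 \<and> L = {c + of_real t * d | t. True}"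
proof -
  obtain a d where d: "d \<noteq> 0" and L: "L = {a + of_real t * d | t. True}"
    using assms(1) unfolding is_line_def by blast
  obtain t0 where c: "c = a + of_real t0 * d" using assms(2) L by blast
  have "L = {c + of_real t * d | t. True}"
  proof (rule set_eqI, rule iffI)
    fix x assume "x \<in> L"
    then obtain t where "x = a + of_real t * d" using L by blast
    hence "x = c + of_real (t - t0) * d" using c by (simp add: algebra_simps)
    thus "x \<in> {c + of_real t * d | t. True}" by blast
  next
    fix x assume "x \<in> {c + of_real t * d | t. True}"
    then obtain t where "x = c + of_real t * d" by blast
    hence "x = a + of_real (t + t0) * d" using c by (simp add: algebra_simps)
    thus "x \<in> L" using L by blast
  qed
  thus ?thesis using d by blast
qed

lemma line_rescale:
  assumes "k \<noteq> 0"
  shows "{c + of_real s * (of_real k * f) | s. True} = {c + of_real s * f | s::real. True}"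
proof (rule set_eqI, rule iffI)
  fix x assume "x \<in> {c + of_real s * (of_real k * f) | s. True}"
  then obtain s where "x = c + of_real s * (of_real k * f)" by blast
  hence "x = c + of_real (s * k) * f" by (simp add: mult.assoc)
  thus "x \<in> {c + of_real s * f | s::real. True}" by blast
next
  fix x assume "x \<in> {c + of_real s * f | s::real. True}"
  then obtain s where "x = c + of_real s * f" by blast
  moreover have "of_real (s/k) * (of_real k * f) = of_real ((s/k)*k) * f" by (simp only: of_real_mult mult.assoc)
  moreover have "(s/k)*k = s" using assms by simp
  ultimately have "x = c + of_real (s / k) * (of_real k * f)" by simp
  thus "x \<in> {c + of_real s * (of_real k * f) | s. True}" by blast
qed

lemma rot_line:
  "rotate_about c \<theta> ` {c + of_real t * d | t. True} = {c + of_real t * (cis \<theta> * d) | t. True}"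
proof (rule set_eqI, rule iffI)
  fix x assume "x \<in> rotate_about c \<theta> ` {c + of_real t * d | t. True}"
  then obtain t where "x = rotate_about c \<theta> (c + of_real t * d)" by blast
  hence "x = c + of_real t * (cis \<theta> * d)" unfolding rotate_about_def by (simp add: ac_simps)
  thus "x \<in> {c + of_real t * (cis \<theta> * d) | t. True}" by blast
next
  fix x assume "x \<in> {c + of_real t * (cis \<theta> * d) | t. True}"
  then obtain t where "x = c + of_real t * (cis \<theta> * d)" by blast
  hence "x = rotate_about c \<theta> (c + of_real t * d)" unfolding rotate_about_def by (simp add: ac_simps)
  thus "x \<in> rotate_about c \<theta> ` {c + of_real t * d | t. True}" by blast
qed

lemma locus_char:
  assumes "d \<noteq> 0" "L1 = {c + of_real t * d | t. True}" "L3 = {c + of_real s * (\<i> * d) | s. True}"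
  shows "rect_locus L1 L3 L2 L4 = {p. \<exists>x2\<in>L2. \<exists>x4\<in>L4. p = (x2+x4)/2 \<and> dist x2 x4 = 2*cmod(p-c)}"
proof -
  have "\<And>p. p \<in> rect_locus L1 L3 L2 L4 \<longleftrightarrow> (\<exists>x2\<in>L2. \<exists>x4\<in>L4. p = (x2+x4)/2 \<and>
      (\<exists>x1\<in>L1. \<exists>x3\<in>L3. p = (x1+x3)/2 \<and> dist x1 x3 = dist x2 x4))"
    unfolding rect_locus_def by blast
  also have "\<And>p. (\<exists>x2\<in>L2. \<exists>x4\<in>L4. p = (x2+x4)/2 \<and>
      (\<exists>x1\<in>L1. \<exists>x3\<in>L3. p = (x1+x3)/2 \<and> dist x1 x3 = dist x2 x4))
     \<longleftrightarrow> (\<exists>x2\<in>L2. \<exists>x4\<in>L4. p = (x2+x4)/2 \<and> dist x2 x4 = 2*cmod(p-c))"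
  proof -
    fix p
    have h: "\<And>x2 x4. (\<exists>x1\<in>L1. \<exists>x3\<in>L3. p = (x1+x3)/2 \<and> dist x1 x3 = dist x2 x4) \<longleftrightarrow> dist x2 x4 = 2*cmod(p-c)"
      unfolding assms(2,3) by (rule key[OF assms(1)])
    show "?thesis p" by (simp only: h)
  qed
  finally show ?thesis by blast
qed

theorem proposition5p1:
  fixes L1 L3 L2 L4 :: "complex set" and c :: complex and \<theta> :: real
  assumes "is_line L1" and "is_line L3" and "L1 \<noteq> L3"
    and "is_line L2" and "is_line L4" and "L2 \<noteq> L4"
    and "orthogonal_lines L1 L3"
    and "c \<in> L1" and "c \<in> L3"
  shows "rect_locus (rotate_about c \<theta> ` L1) (rotate_about c \<theta> ` L3) L2 L4
           = rect_locus L1 L3 L2 L4"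
proof -
  obtain d where d: "d \<noteq> 0" and L1: "L1 = {c + of_real t * d | t. True}"
    using line_through[OF assms(1,8)] by blast
  obtain e where e: "e \<noteq> 0" and L3e: "L3 = {c + of_real t * e | t. True}"
    using line_through[OF assms(2,9)] by blast
  have "(c + of_real 1 * d) \<in> L1" "(c + of_real 0 * d) \<in> L1" using L1 by blast+
  moreover have "(c + of_real 1 * e) \<in> L3" "(c + of_real 0 * e) \<in> L3" using L3e by blast+
  ultimately have "((c + of_real 1 * d) - (c + of_real 0 * d)) \<bullet> ((c + of_real 1 * e) - (c + of_real 0 * e)) = 0"
    using assms(7) unfolding orthogonal_lines_def by blast
  hence de: "d \<bullet> e = 0" by simp
  define k where "k = (Re d * Im e - Im d * Re e)/(Re d ^2 + Im d ^2)"
  have ek: "e = of_real k * (\<i> * d)" using perp[OF d de] k_def by simp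
  hence "k \<noteq> 0" using e by auto
  hence L3: "L3 = {c + of_real s * (\<i> * d) | s. True}" using L3e ek line_rescale by metis
  have cd: "cis \<theta> * d \<noteq> 0" using d by simp
  have R1: "rotate_about c \<theta> ` L1 = {c + of_real t * (cis \<theta> * d) | t. True}"
    using L1 rot_line by simp
  have R3: "rotate_about c \<theta> ` L3 = {c + of_real t * (\<i> * (cis \<theta> * d)) | t. True}"
    using L3 rot_line[of c \<theta> "\<i> * d"] by (simp add: ac_simps)
  show ?thesis
    using locus_char[OF cd R1 R3] locus_char[OF d L1 L3] by simp
qed
end
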